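(* Let $B>0$, $\beta>0$, and $\mathcal{G}\subseteq\mathbb{R}^d$. Then $\mathcal{M}_{B,\beta}$ is $\max_{\boldsymbol g\in\mathcal{G}}\sum_{i=1}^d\log\left(1+\frac{1}{\beta+\mathrm{dist}(g_i,\mathcal{C}_B)}\right)$-differentially private on $\mathcal{G}$.
   Context: For $B>0$, $\mathrm{clip}\{g,B\}=\max\{-B,\min\{B,g\}\}$. The randomized compressor $\mathcal{M}_{B,\beta}:\mathbb{R}^d\to\{-1,1\}^d$ acts independently on each coordinate: $[\mathcal{M}_{B,\beta}]_i(\boldsymbol g)=1$ with probability $\frac{B+\beta+\mathrm{clip}\{g_i,B\}}{2B+2\beta}$ and $=-1$ otherwise, where $g_i$ is the $i$-th coordinate of $\boldsymbol g$. Let $\mathcal{C}_B=(-\infty,-B)\cup(B,\infty)$ and for $g\in\mathbb{R}$ let $\mathrm{dist}(g,\mathcal{C}_B)=\inf_{g'\in\mathcal{C}_B}|g-g'|$. A randomized algorithm $\mathcal{M}$ is $\epsilon$-differentially private on $\mathcal{G}$ if $\Pr[\mathcal{M}(x)\in\mathcal{S}]\le e^{\epsilon}\Pr[\mathcal{M}(y)\in\mathcal{S}]$ for all subsets $\mathcal{S}$ of its range and all $x,y\in\mathcal{G}$ with $\|x-y\|_1\le1$. *)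

theory Defs
  imports "HOL-Analysis.Analysis" "HOL-Probability.Probability"
begin

definition clip :: "real \<Rightarrow> real \<Rightarrow> real" where
  "clip g B = max (- B) (min B g)"

definition plus_prob :: "real \<Rightarrow> real \<Rightarrow> real \<Rightarrow> real" where
  "plus_prob B \<beta> g = (B + \<beta> + clip g B) / (2 * B + 2 * \<beta>)"

definition compressor :: "real \<Rightarrow> real \<Rightarrow> real ^ 'n \<Rightarrow> ('n \<Rightarrow> int) pmf" where
  "compressor B \<beta> g =
     Pi_pmf UNIV 0 (\<lambda>i. map_pmf (\<lambda>b. if b then 1 else -1)
                                  (bernoulli_pmf (plus_prob B \<beta> (g $ i))))"

definition CB :: "real \<Rightarrow> real set" where
  "CB B = {..< - B} \<union> {B <..}"

definition diff_private_on :: "real \<Rightarrow> (real ^ 'n) set \<Rightarrow> (real ^ 'n \<Rightarrow> 'b pmf) \<Rightarrow> bool" where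
  "diff_private_on \<epsilon> G M \<longleftrightarrow>
     (\<forall>x\<in>G. \<forall>y\<in>G. (\<Sum>i\<in>UNIV. \<bar>x $ i - y $ i\<bar>) \<le> 1 \<longrightarrow>
        (\<forall>S. measure_pmf.prob (M x) S \<le> exp \<epsilon> * measure_pmf.prob (M y) S))"

end

theory Submission
  imports Defs
begin

lemma pmf_sign_bern:
  fixes p :: real
  assumes "0 \<le> p" "p \<le> 1"
  shows "pmf (map_pmf (\<lambda>b. if b then (1::int) else -1) (bernoulli_pmf p)) v =
         (if v = 1 then p else if v = -1 then 1 - p else 0)"
proof -
  have "pmf (map_pmf (\<lambda>b. if b then (1::int) else -1) (bernoulli_pmf p)) v =
        measure (bernoulli_pmf p) ((\<lambda>b. if b then (1::int) else -1) -` {v})" by (rule pmf_map)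
  moreover have "v = 1 \<Longrightarrow> (\<lambda>b. if b then (1::int) else -1) -` {v} = {True}" by (auto split: if_splits)
  moreover have "v = -1 \<Longrightarrow> (\<lambda>b. if b then (1::int) else -1) -` {v} = {False}" by (auto split: if_splits)
  moreover have "v \<noteq> 1 \<Longrightarrow> v \<noteq> -1 \<Longrightarrow> (\<lambda>b. if b then (1::int) else -1) -` {v} = {}" by (auto split: if_splits)
  ultimately show ?thesis using assms
    by (auto simp: measure_pmf_single split: if_splits)
qed

lemma clip_bounds: "B > 0 \<Longrightarrow> - B \<le> clip g B \<and> clip g B \<le> B"
  by (auto simp: clip_def)

lemma clip_lip: "\<bar>clip a B - clip b B\<bar> \<le> \<bar>a - b\<bar>"
  by (auto simp: clip_def)

lemma infdist_CB:
  assumes "B > 0"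
  shows "infdist b (CB B) \<le> B + clip b B \<and> infdist b (CB B) \<le> B - clip b B"
proof (cases "\<bar>b\<bar> \<le> B")
  case True
  have c: "clip b B = b" using True by (auto simp: clip_def)
  have 1: "infdist b (CB B) \<le> B + b"
  proof (rule field_le_epsilon)
    fix e :: real assume "0 < e"
    then have "- B - e \<in> CB B" by (simp add: CB_def)
    then have "infdist b (CB B) \<le> dist b (- B - e)" by (rule infdist_le)
    also have "\<dots> = B + b + e" using True \<open>0 < e\<close> by (simp add: dist_real_def)
    finally show "infdist b (CB B) \<le> B + b + e" .
  qed
  have 2: "infdist b (CB B) \<le> B - b"
  proof (rule field_le_epsilon)
    fix e :: real assume "0 < e"
    then have "B + e \<in> CB B" by (simp add: CB_def)
    then have "infdist b (CB B) \<le> dist b (B + e)" by (rule infdist_le)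
    also have "\<dots> = B - b + e" using True \<open>0 < e\<close> by (simp add: dist_real_def)
    finally show "infdist b (CB B) \<le> B - b + e" .
  qed
  show ?thesis using 1 2 c by simp
next
  case False
  then have "b \<in> CB B" by (auto simp: CB_def)
  then show ?thesis using clip_bounds[OF assms, of b] by simp
qed

lemma key_ineq:
  fixes u w d \<beta> K :: real
  assumes "\<beta> > 0" "0 \<le> d" "d \<le> w" "u \<le> w + 1" "K > 0" "0 \<le> u"
  shows "(\<beta> + u) / K \<le> (1 + 1 / (\<beta> + d)) * ((\<beta> + w) / K)"
proof -
  have "1 \<le> (\<beta> + w) / (\<beta> + d)" using assms by simp
  then have "\<beta> + u \<le> (\<beta> + w) + (\<beta> + w) / (\<beta> + d)" using assms by linarith
  also have "\<dots> = (1 + 1 / (\<beta> + d)) * (\<beta> + w)" by (simp add: algebra_simps)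
  finally have "\<beta> + u \<le> (1 + 1 / (\<beta> + d)) * (\<beta> + w)" .
  then show ?thesis using assms by (simp add: divide_right_mono)
qed

abbreviation mp :: "real \<Rightarrow> real \<Rightarrow> real \<Rightarrow> int pmf" where
  "mp B \<beta> a \<equiv> map_pmf (\<lambda>b. if b then 1 else -1) (bernoulli_pmf (plus_prob B \<beta> a))"

lemma coord:
  assumes "B > 0" "\<beta> > 0" "\<bar>a - b\<bar> \<le> 1"
  shows "pmf (mp B \<beta> a) v \<le> (1 + 1 / (\<beta> + infdist b (CB B))) * pmf (mp B \<beta> b) v"
proof -
  define ca cb d where "ca = clip a B" and "cb = clip b B" and "d = infdist b (CB B)"
  have ca: "-B \<le> ca" "ca \<le> B" and cb: "-B \<le> cb" "cb \<le> B"
    using clip_bounds[OF assms(1)] unfolding ca_def cb_def by auto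
  have lip: "\<bar>ca - cb\<bar> \<le> 1" using clip_lip[of a B b] assms unfolding ca_def cb_def by linarith
  have d: "0 \<le> d" "d \<le> B + cb" "d \<le> B - cb"
    using infdist_CB[OF assms(1), of b] infdist_nonneg unfolding d_def cb_def by auto
  define K where "K = 2 * B + 2 * \<beta>"
  have K: "K > 0" using assms unfolding K_def by simp
  have pa: "plus_prob B \<beta> a = (\<beta> + (B + ca)) / K"
    unfolding plus_prob_def ca_def K_def by (simp add: algebra_simps)
  have pb: "plus_prob B \<beta> b = (\<beta> + (B + cb)) / K"
    unfolding plus_prob_def cb_def K_def by (simp add: algebra_simps)
  have qa: "1 - plus_prob B \<beta> a = (\<beta> + (B - ca)) / K"
    using K unfolding pa K_def by (simp add: field_simps)
  have qb: "1 - plus_prob B \<beta> b = (\<beta> + (B - cb)) / K"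
    using K unfolding pb K_def by (simp add: field_simps)
  have r01: "0 \<le> plus_prob B \<beta> z \<and> plus_prob B \<beta> z \<le> 1" for z
    using clip_bounds[OF assms(1), of z] assms unfolding plus_prob_def
    by (simp add: field_simps)
  have e: "pmf (mp B \<beta> z) v = (if v = 1 then plus_prob B \<beta> z else if v = -1 then 1 - plus_prob B \<beta> z else 0)" for z
    using r01[of z] by (intro pmf_sign_bern) auto
  show ?thesis
  proof (cases "v = 1")
    case True
    then show ?thesis unfolding e[of a] e[of b] using True pa pb
      key_ineq[OF assms(2) d(1) d(2), of "B + ca" K] lip ca K by (simp add: d_def[symmetric])
  next
    case False
    show ?thesis
    proof (cases "v = -1")
      case True
      then show ?thesis unfolding e[of a] e[of b] using True qa qb
        key_ineq[OF assms(2) d(1) d(3), of "B - ca" K] lip ca K by (simp add: d_def[symmetric])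
    next
      case False
      then show ?thesis unfolding e[of a] e[of b] using \<open>v \<noteq> 1\<close> by simp
    qed
  qed
qed

theorem theorem3:
  fixes B \<beta> :: real and G :: "(real ^ 'n) set"
  assumes "B > 0" and "\<beta> > 0"
  shows "diff_private_on
           (SUP g\<in>G. \<Sum>i\<in>UNIV. ln (1 + 1 / (\<beta> + infdist (g $ i) (CB B))))
           G (compressor B \<beta>)"
  unfolding diff_private_on_def
proof (intro ballI impI allI)
  fix x y :: "real ^ 'n" and S
  assume xG: "x \<in> G" and yG: "y \<in> G" and xy: "(\<Sum>i\<in>UNIV. \<bar>x $ i - y $ i\<bar>) \<le> 1"
  define f where "f g = (\<Sum>i\<in>UNIV. ln (1 + 1 / (\<beta> + infdist (g $ i) (CB B))))" for g :: "real ^ 'n"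
  define r where "r i = 1 + 1 / (\<beta> + infdist (y $ i) (CB B))" for i
  have rpos: "r i > 0" for i unfolding r_def using assms infdist_nonneg[of "y $ i" "CB B"]
    by (simp add: add_pos_nonneg)
  have xyi: "\<bar>x $ i - y $ i\<bar> \<le> 1" for i
    using member_le_sum[of i UNIV "\<lambda>i. \<bar>x $ i - y $ i\<bar>"] xy by simp
  have pmfc: "pmf (compressor B \<beta> z) \<omega> = (\<Prod>i\<in>UNIV. pmf (mp B \<beta> (z $ i)) (\<omega> i))" for z \<omega>
    unfolding compressor_def by (rule pmf_Pi') auto
  have pw: "pmf (compressor B \<beta> x) \<omega> \<le> prod r UNIV * pmf (compressor B \<beta> y) \<omega>" for \<omega>
  proof -
    have "(\<Prod>i\<in>UNIV. pmf (mp B \<beta> (x $ i)) (\<omega> i)) \<le> (\<Prod>i\<in>UNIV. r i * pmf (mp B \<beta> (y $ i)) (\<omega> i))"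
      by (intro prod_mono conjI pmf_nonneg) (unfold r_def, intro coord[OF assms xyi])
    then show ?thesis unfolding pmfc prod.distrib .
  qed
  have bdd: "bdd_above (f ` G)"
  proof (rule bdd_aboveI2)
    fix g assume "g \<in> G"
    show "f g \<le> real CARD('n) * ln (1 + 1 / \<beta>)"
      unfolding f_def
    proof (rule sum_bounded_above[where A=UNIV, simplified])
      fix i
      have d0: "0 \<le> infdist (g $ i) (CB B)" by (rule infdist_nonneg)
      have "1 / (\<beta> + infdist (g $ i) (CB B)) \<le> 1 / \<beta>"
        using assms d0 by (intro divide_left_mono) auto
      moreover have "0 < 1 + 1 / (\<beta> + infdist (g $ i) (CB B))" using assms d0
        by (simp add: add_pos_nonneg)
      ultimately show "ln (1 + 1 / (\<beta> + infdist (g $ i) (CB B))) \<le> ln (1 + 1 / \<beta>)"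
        by simp
    qed
  qed
  have "prod r UNIV = exp (f y)"
    unfolding f_def r_def[symmetric] using rpos by (simp add: exp_sum)
  also have "\<dots> \<le> exp (SUP g\<in>G. f g)"
    using cSUP_upper[OF yG bdd] by simp
  finally have R: "prod r UNIV \<le> exp (SUP g\<in>G. f g)" .
  have "measure_pmf.prob (compressor B \<beta> x) S = infsetsum (pmf (compressor B \<beta> x)) S"
    by (rule measure_pmf_conv_infsetsum)
  also have "\<dots> \<le> infsetsum (\<lambda>\<omega>. prod r UNIV * pmf (compressor B \<beta> y) \<omega>) S"
    by (intro infsetsum_mono pw abs_summable_on_cmult_right pmf_abs_summable)
  also have "\<dots> = prod r UNIV * measure_pmf.prob (compressor B \<beta> y) S"
    by (subst infsetsum_cmult_right) (auto simp: measure_pmf_conv_infsetsum)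
  also have "\<dots> \<le> exp (SUP g\<in>G. f g) * measure_pmf.prob (compressor B \<beta> y) S"
    by (intro mult_right_mono R) auto
  finally show "measure_pmf.prob (compressor B \<beta> x) S
      \<le> exp (SUP g\<in>G. \<Sum>i\<in>UNIV. ln (1 + 1 / (\<beta> + infdist (g $ i) (CB B)))) *
         measure_pmf.prob (compressor B \<beta> y) S"
    unfolding f_def .
qed

end
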